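(* Let $\Lambda=(\lambda_1,\lambda_2)\in(0,\infty)^2$, $\phi\in[0,1)$ and $0\le\theta<\theta'\le 1$. Let $(X_1,X_2)\sim\mathcal{BZIP}^+(\Lambda,\theta,\phi)$ and $(X_1',X_2')\sim\mathcal{BZIP}^+(\Lambda,\theta',\phi)$, with joint distribution functions $H^+_{\Lambda,\phi,\theta}$ and $H^+_{\Lambda,\phi,\theta'}$. Then $(X_1,X_2)\prec_{PQD}(X_1',X_2')$, i.e. $H^+_{\Lambda,\phi,\theta}(x_1,x_2)\le H^+_{\Lambda,\phi,\theta'}(x_1,x_2)$ for all $(x_1,x_2)\in\mathbb{R}^2$ (the two pairs having identical marginal distributions).
   Context: For $\mu>0$, $G_\mu$ denotes the distribution function of the Poisson distribution with mean $\mu$, and $G_\mu^{-1}(u)=\inf\{x\in\mathbb{N}:G_\mu(x)\ge u\}$ its quantile function (for $\mu=0$, $G_0^{-1}\equiv 0$). The model $\mathcal{BZIP}^{\pm}(\Lambda,\theta,\phi)$, with $\Lambda=(\lambda_1,\lambda_2)\in(0,\infty)^2$, $\theta\in[0,1]$, $\phi\in[0,1)$, is the law of $(X_1,X_2)=W\,(T_1,T_2)$, where: $W\sim$ Bernoulli$(1-\phi)$ (so $P(W=0)=\phi$); $T_j=Y_j+Z_j$ for $j=1,2$; $Y_1\sim\mathcal{P}((1-\theta)\lambda_1)$, $Y_2\sim\mathcal{P}((1-\theta)\lambda_2)$; $U\sim\mathcal U(0,1)$; in the positive-dependence model $\mathcal{BZIP}^+$, $(Z_1,Z_2)=(G^{-1}_{\theta\lambda_1}(U),G^{-1}_{\theta\lambda_2}(U))$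 (comonotonic shock), and in the negative-dependence model $\mathcal{BZIP}^-$, $(Z_1,Z_2)=(G^{-1}_{\theta\lambda_1}(U),G^{-1}_{\theta\lambda_2}(1-U))$ (counter-monotonic shock); $W$, $Y_1$, $Y_2$, $U$ are mutually independent. The law of $(T_1,T_2)$ is denoted $\mathcal{BP}^{\pm}(\Lambda,\theta)$. For random pairs with the same marginals, $(X_1,X_2)\prec_{PQD}(X_1',X_2')$ means $P(X_1\le x_1,X_2\le x_2)\le P(X_1'\le x_1,X_2'\le x_2)$ for all $x_1,x_2$. *)

theory Defs
  imports "HOL-Probability.Probability"
begin

definition pois :: "real \<Rightarrow> nat pmf" where
  "pois mu = (if mu = 0 then return_pmf 0 else poisson_pmf mu)"

definition Gpois :: "real \<Rightarrow> nat \<Rightarrow> real" where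
  "Gpois mu x = measure_pmf.prob (pois mu) {..x}"

definition Gpois_inv :: "real \<Rightarrow> real \<Rightarrow> nat" where
  "Gpois_inv mu u = (if mu = 0 then 0 else (LEAST x. Gpois mu x \<ge> u))"

text \<open>Underlying probability space for W, Y1, Y2 (discrete, independent) and U ~ U(0,1),
  all mutually independent (product measure).\<close>
definition bzip_space :: "real \<times> real \<Rightarrow> real \<Rightarrow> real \<Rightarrow> ((bool \<times> nat \<times> nat) \<times> real) measure" where
  "bzip_space L theta phi =
     measure_pmf (pair_pmf (bernoulli_pmf (1 - phi))
                  (pair_pmf (pois ((1 - theta) * fst L)) (pois ((1 - theta) * snd L))))
     \<Otimes>\<^sub>M uniform_measure lborel {0<..<1::real}"

definition bzip_plus_X :: "real \<times> real \<Rightarrow> real \<Rightarrow> (bool \<times> nat \<times> nat) \<times> real \<Rightarrow> nat \<times> nat" where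
  "bzip_plus_X L theta \<omega> =
     (case \<omega> of ((w, y1, y2), u) \<Rightarrow>
        (if w then (y1 + Gpois_inv (theta * fst L) u, y2 + Gpois_inv (theta * snd L) u)
         else (0, 0)))"

definition H_plus :: "real \<times> real \<Rightarrow> real \<Rightarrow> real \<Rightarrow> real \<Rightarrow> real \<Rightarrow> real" where
  "H_plus L phi theta x1 x2 =
     measure (bzip_space L theta phi)
       {\<omega> \<in> space (bzip_space L theta phi).
          real (fst (bzip_plus_X L theta \<omega>)) \<le> x1 \<and> real (snd (bzip_plus_X L theta \<omega>)) \<le> x2}"

definition F1_plus :: "real \<times> real \<Rightarrow> real \<Rightarrow> real \<Rightarrow> real \<Rightarrow> real" where
  "F1_plus L phi theta x =
     measure (bzip_space L theta phi)
       {\<omega> \<in> space (bzip_space L theta phi). real (fst (bzip_plus_X L theta \<omega>)) \<le> x}"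

definition F2_plus :: "real \<times> real \<Rightarrow> real \<Rightarrow> real \<Rightarrow> real \<Rightarrow> real" where
  "F2_plus L phi theta x =
     measure (bzip_space L theta phi)
       {\<omega> \<in> space (bzip_space L theta phi). real (snd (bzip_plus_X L theta \<omega>)) \<le> x}"

definition bzip_plus_PQD :: "real \<times> real \<Rightarrow> real \<Rightarrow> real \<Rightarrow> real \<Rightarrow> bool" where
  "bzip_plus_PQD L phi theta theta' \<longleftrightarrow>
     (\<forall>x. F1_plus L phi theta x = F1_plus L phi theta' x) \<and>
     (\<forall>x. F2_plus L phi theta x = F2_plus L phi theta' x) \<and>
     (\<forall>x1 x2. H_plus L phi theta x1 x2 \<le> H_plus L phi theta' x1 x2)"

end

theory Submission
  imports Defs
begin


definition pp :: "real \<Rightarrow> nat \<Rightarrow> real" where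
  "pp mu k = exp (-mu) * mu ^ k / fact k"

definition GG :: "real \<Rightarrow> nat \<Rightarrow> real" where
  "GG mu c = (\<Sum>k\<le>c. pp mu k)"

lemma pp_nonneg: "0 \<le> mu \<Longrightarrow> 0 \<le> pp mu k"
  by (simp add: pp_def)

lemma GG_nonneg: "0 \<le> mu \<Longrightarrow> 0 \<le> GG mu c"
  by (simp add: GG_def pp_nonneg sum_nonneg)

lemma pmf_pois: "0 \<le> mu \<Longrightarrow> pmf (pois mu) k = pp mu k"
proof (cases "mu = 0")
  case True
  then show ?thesis by (cases k) (auto simp: pois_def pp_def indicator_def)
next
  case False
  assume "0 \<le> mu"
  with False have "0 < mu" by simp
  then show ?thesis using False by (simp add: pois_def pp_def)
qed

lemma Gpois_eq: "0 \<le> mu \<Longrightarrow> Gpois mu c = GG mu c"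
  by (simp add: Gpois_def GG_def measure_measure_pmf_finite pmf_pois)

lemma GG_le1: "0 \<le> mu \<Longrightarrow> GG mu c \<le> 1"
  using Gpois_eq[of mu c] measure_pmf.prob_le_1 unfolding Gpois_def by metis

lemma pp_conv: "(\<Sum>y\<le>k. pp m y * pp d (k - y)) = pp (m + d) k"
proof -
  have "(\<Sum>y\<le>k. pp m y * pp d (k - y)) =
        (\<Sum>y\<le>k. exp (-(m+d)) / fact k * (of_nat (k choose y) * m ^ y * d ^ (k - y)))"
  proof (rule sum.cong[OF refl])
    fix y assume "y \<in> {..k}"
    then have yk: "y \<le> k" by simp
    have "real (k choose y) = fact k / (fact y * fact (k - y))"
      using binomial_fact[OF yk] by simp
    then show "pp m y * pp d (k - y) = exp (-(m+d)) / fact k * (of_nat (k choose y) * m ^ y * d ^ (k - y))"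
      by (simp add: pp_def exp_add[symmetric] field_simps)
  qed
  also have "\<dots> = exp (-(m+d)) / fact k * (m + d) ^ k"
    by (simp add: binomial_ring sum_distrib_left)
  finally show ?thesis by (simp add: pp_def)
qed

lemma tri: "(\<Sum>k\<le>(a::nat). \<Sum>i\<le>k. g i (k - i)) = (\<Sum>u\<le>a. \<Sum>v\<le>a - u. (g u v :: real))"
proof -
  have "(\<Sum>k\<le>a. \<Sum>i\<le>k. g i (k - i)) = (\<Sum>(i,j)\<in>{(i,j). i+j \<le> a}. g i j)"
    by (rule sum.triangle_reindex_eq[symmetric])
  also have "{(i,j). i+j \<le> a} = Sigma {..a} (\<lambda>u. {..a-u})" by auto
  also have "(\<Sum>(i,j)\<in>Sigma {..a} (\<lambda>u. {..a-u}). g i j) = (\<Sum>u\<le>a. \<Sum>v\<le>a - u. g u v)"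
    by (rule sum.Sigma[symmetric]) auto
  finally show ?thesis .
qed

lemma GG_conv: "(\<Sum>y\<le>c. pp m y * GG d (c - y)) = GG (m + d) c"
proof -
  have "(\<Sum>y\<le>c. pp m y * GG d (c - y)) = (\<Sum>y\<le>c. \<Sum>z\<le>c-y. pp m y * pp d z)"
    by (simp add: GG_def sum_distrib_left)
  also have "\<dots> = (\<Sum>k\<le>c. \<Sum>y\<le>k. pp m y * pp d (k - y))"
    by (rule tri[symmetric])
  also have "\<dots> = GG (m + d) c" by (simp add: pp_conv GG_def)
  finally show ?thesis .
qed


lemma IB:
  fixes A B :: nat
  assumes "0 \<le> d1" "0 \<le> d2" "0 \<le> s1" "0 \<le> s2"
  shows "(\<Sum>v1\<le>A. \<Sum>v2\<le>B. pp d1 v1 * pp d2 v2 * min (GG s1 (A - v1)) (GG s2 (B - v2)))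
         \<le> min (GG (s1 + d1) A) (GG (s2 + d2) B)"
proof -
  have nn: "\<And>v1 v2. 0 \<le> pp d1 v1 * pp d2 v2" using assms by (simp add: pp_nonneg)
  have 1: "(\<Sum>v1\<le>A. \<Sum>v2\<le>B. pp d1 v1 * pp d2 v2 * min (GG s1 (A - v1)) (GG s2 (B - v2)))
        \<le> (\<Sum>v1\<le>A. \<Sum>v2\<le>B. pp d1 v1 * pp d2 v2 * GG s1 (A - v1))"
    by (intro sum_mono mult_left_mono) (auto simp: nn)
  have 2: "(\<Sum>v1\<le>A. \<Sum>v2\<le>B. pp d1 v1 * pp d2 v2 * min (GG s1 (A - v1)) (GG s2 (B - v2)))
        \<le> (\<Sum>v1\<le>A. \<Sum>v2\<le>B. pp d1 v1 * pp d2 v2 * GG s2 (B - v2))"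
    by (intro sum_mono mult_left_mono) (auto simp: nn)
  have e1: "(\<Sum>v1\<le>A. \<Sum>v2\<le>B. pp d1 v1 * pp d2 v2 * GG s1 (A - v1))
      = (\<Sum>v1\<le>A. pp d1 v1 * GG s1 (A - v1)) * GG d2 B"
    by (simp add: GG_def[of d2] sum_distrib_left sum_distrib_right mult_ac)
  have e2: "(\<Sum>v1\<le>A. \<Sum>v2\<le>B. pp d1 v1 * pp d2 v2 * GG s2 (B - v2))
      = GG d1 A * (\<Sum>v2\<le>B. pp d2 v2 * GG s2 (B - v2))"
  proof -
    have "(\<Sum>v1\<le>A. \<Sum>v2\<le>B. pp d1 v1 * pp d2 v2 * GG s2 (B - v2))
       = (\<Sum>v1\<le>A. pp d1 v1 * (\<Sum>v2\<le>B. pp d2 v2 * GG s2 (B - v2)))"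
      by (simp add: sum_distrib_left mult.assoc)
    also have "\<dots> = GG d1 A * (\<Sum>v2\<le>B. pp d2 v2 * GG s2 (B - v2))"
      by (simp only: GG_def[of d1] sum_distrib_right)
    finally show ?thesis .
  qed
  have c1: "(\<Sum>v1\<le>A. pp d1 v1 * GG s1 (A - v1)) = GG (s1 + d1) A"
    using GG_conv[where c=A and m=d1 and d=s1] by (simp add: add.commute)
  have c2: "(\<Sum>v2\<le>B. pp d2 v2 * GG s2 (B - v2)) = GG (s2 + d2) B"
    using GG_conv[where c=B and m=d2 and d=s2] by (simp add: add.commute)
  have "GG (s1 + d1) A * GG d2 B \<le> GG (s1 + d1) A"
    using assms GG_le1[of d2 B] GG_nonneg[of "s1+d1" A] by (simp add: mult_left_le)
  then have "(\<Sum>v1\<le>A. \<Sum>v2\<le>B. pp d1 v1 * pp d2 v2 * min (GG s1 (A - v1)) (GG s2 (B - v2))) \<le> GG (s1 + d1) A"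
    using 1 unfolding e1 c1 by linarith
  moreover have "GG d1 A * GG (s2 + d2) B \<le> GG (s2 + d2) B"
    using assms GG_le1[of d1 A] GG_nonneg[of "s2+d2" B] by (simp add: mult_left_le_one_le GG_nonneg)
  then have "(\<Sum>v1\<le>A. \<Sum>v2\<le>B. pp d1 v1 * pp d2 v2 * min (GG s1 (A - v1)) (GG s2 (B - v2))) \<le> GG (s2 + d2) B"
    using 2 unfolding e2 c2 by linarith
  ultimately show ?thesis by simp
qed

lemma expand1:
  "(\<Sum>y\<le>a. pp (m + d) y * F (a - y)) = (\<Sum>u\<le>a. pp m u * (\<Sum>v\<le>a-u. pp d v * F (a - u - v)))"
proof -
  have "(\<Sum>y\<le>a. pp (m + d) y * F (a - y)) = (\<Sum>y\<le>a. \<Sum>i\<le>y. pp m i * pp d (y - i) * F (a - i - (y - i)))"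
    by (intro sum.cong refl) (auto simp: pp_conv[symmetric] sum_distrib_right)
  also have "\<dots> = (\<Sum>u\<le>a. \<Sum>v\<le>a-u. pp m u * pp d v * F (a - u - v))"
    by (rule tri[where g = "\<lambda>i j. pp m i * pp d j * F (a - i - j)"])
  finally show ?thesis by (simp add: sum_distrib_left mult_ac)
qed

definition QQ :: "real \<Rightarrow> real \<Rightarrow> real \<Rightarrow> real \<Rightarrow> nat \<Rightarrow> nat \<Rightarrow> real" where
  "QQ m1 m2 s1 s2 a b = (\<Sum>y1\<le>a. \<Sum>y2\<le>b. pp m1 y1 * pp m2 y2 * min (GG s1 (a - y1)) (GG s2 (b - y2)))"

lemma QQ_mono:
  assumes "0 \<le> m1" "0 \<le> m2" "0 \<le> d1" "0 \<le> d2" "0 \<le> s1" "0 \<le> s2"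
  shows "QQ (m1 + d1) (m2 + d2) s1 s2 a b \<le> QQ m1 m2 (s1 + d1) (s2 + d2) a b"
proof -
  define F1 where "F1 c = (\<Sum>y2\<le>b. pp (m2 + d2) y2 * min (GG s1 c) (GG s2 (b - y2)))" for c
  have "QQ (m1 + d1) (m2 + d2) s1 s2 a b = (\<Sum>y1\<le>a. pp (m1 + d1) y1 * F1 (a - y1))"
    by (simp add: QQ_def F1_def sum_distrib_left mult_ac)
  also have "\<dots> = (\<Sum>u1\<le>a. pp m1 u1 * (\<Sum>v1\<le>a-u1. pp d1 v1 * F1 (a - u1 - v1)))"
    by (rule expand1)
  also have "\<dots> \<le> (\<Sum>u1\<le>a. pp m1 u1 * (\<Sum>u2\<le>b. pp m2 u2 * min (GG (s1 + d1) (a - u1)) (GG (s2 + d2) (b - u2))))"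
  proof (intro sum_mono mult_left_mono)
    fix u1 assume "u1 \<in> {..a}"
    define A where "A = a - u1"
    have F1e: "F1 c = (\<Sum>u2\<le>b. pp m2 u2 * (\<Sum>v2\<le>b-u2. pp d2 v2 * min (GG s1 c) (GG s2 (b - u2 - v2))))" for c
      unfolding F1_def by (rule expand1)
    have "(\<Sum>v1\<le>A. pp d1 v1 * F1 (A - v1))
       = (\<Sum>v1\<le>A. \<Sum>u2\<le>b. \<Sum>v2\<le>b-u2. pp m2 u2 * (pp d1 v1 * pp d2 v2 * min (GG s1 (A - v1)) (GG s2 (b - u2 - v2))))"
      by (simp add: F1e sum_distrib_left mult_ac)
    also have "\<dots> = (\<Sum>u2\<le>b. \<Sum>v1\<le>A. \<Sum>v2\<le>b-u2. pp m2 u2 * (pp d1 v1 * pp d2 v2 * min (GG s1 (A - v1)) (GG s2 (b - u2 - v2))))"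
      by (rule sum.swap)
    also have "\<dots> = (\<Sum>u2\<le>b. pp m2 u2 * (\<Sum>v1\<le>A. \<Sum>v2\<le>b-u2. pp d1 v1 * pp d2 v2 * min (GG s1 (A - v1)) (GG s2 (b - u2 - v2))))"
      by (simp add: sum_distrib_left)
    also have "\<dots> \<le> (\<Sum>u2\<le>b. pp m2 u2 * min (GG (s1 + d1) A) (GG (s2 + d2) (b - u2)))"
      by (intro sum_mono mult_left_mono IB) (auto simp: assms pp_nonneg)
    finally show "(\<Sum>v1\<le>a-u1. pp d1 v1 * F1 (a - u1 - v1))
       \<le> (\<Sum>u2\<le>b. pp m2 u2 * min (GG (s1 + d1) (a - u1)) (GG (s2 + d2) (b - u2)))"
      by (simp add: A_def)
  qed (auto simp: assms pp_nonneg)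
  also have "\<dots> = QQ m1 m2 (s1 + d1) (s2 + d2) a b"
    by (simp add: QQ_def sum_distrib_left mult_ac)
  finally show ?thesis .
qed



lemma Gpois_mono: "x \<le> n \<Longrightarrow> Gpois mu x \<le> Gpois mu n"
  unfolding Gpois_def by (intro measure_pmf.finite_measure_mono) auto

lemma Gpois_le1: "Gpois mu n \<le> 1"
  unfolding Gpois_def by simp

lemma Gpois_lim: "(\<lambda>n. Gpois mu n) \<longlonglongrightarrow> 1"
proof -
  have "(\<lambda>i. measure_pmf.prob (pois mu) {..i}) \<longlonglongrightarrow> measure_pmf.prob (pois mu) (\<Union>i. {..i})"
    by (intro measure_pmf.finite_Lim_measure_incseq) (auto simp: incseq_def)
  moreover have "(\<Union>i. {..i::nat}) = UNIV" by auto
  ultimately show ?thesis by (simp add: Gpois_def)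
qed

lemma Gpois_ex: assumes "u < 1" shows "\<exists>x. u \<le> Gpois mu x"
proof -
  have "eventually (\<lambda>n. u < Gpois mu n) sequentially"
    using order_tendstoD(1)[OF Gpois_lim assms] .
  then obtain n where "u < Gpois mu n" by (auto simp: eventually_sequentially)
  then show ?thesis by (auto intro: less_imp_le)
qed

lemma Gpois_zero: "Gpois 0 n = 1"
  by (simp add: Gpois_def pois_def)

lemma quantile: assumes "u < 1" shows "Gpois_inv mu u \<le> n \<longleftrightarrow> u \<le> Gpois mu n"
proof (cases "mu = 0")
  case True then show ?thesis by (simp add: Gpois_inv_def Gpois_zero assms less_imp_le)
next
  case False
  have ex: "\<exists>x. u \<le> Gpois mu x" by (rule Gpois_ex[OF assms])
  show ?thesis
  proof
    assume "Gpois_inv mu u \<le> n"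
    moreover have "u \<le> Gpois mu (Gpois_inv mu u)"
      using False LeastI_ex[OF ex] by (simp add: Gpois_inv_def)
    ultimately show "u \<le> Gpois mu n" using Gpois_mono order_trans by blast
  next
    assume "u \<le> Gpois mu n"
    then show "Gpois_inv mu u \<le> n" using False by (simp add: Gpois_inv_def Least_le)
  qed
qed

lemma Gpois_inv_gt1: assumes "1 < u" shows "Gpois_inv mu u = Gpois_inv mu 2"
proof -
  have "\<And>x. \<not> u \<le> Gpois mu x" "\<And>x. \<not> (2::real) \<le> Gpois mu x"
    using Gpois_le1 assms by (smt (verit))+
  then show ?thesis by (simp add: Gpois_inv_def)
qed

lemma sub_sets: "{u. Gpois_inv mu u \<le> n} \<in> sets borel"
proof -
  have "{u. Gpois_inv mu u \<le> n} = ({..Gpois mu n} \<inter> {..<1}) \<union> (if Gpois_inv mu 1 \<le> n then {1} else {})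
     \<union> (if Gpois_inv mu 2 \<le> n then {1<..} else {})"
  proof (rule set_eqI)
    fix u :: real
    consider "u < 1" | "u = 1" | "1 < u" by linarith
    then show "u \<in> {u. Gpois_inv mu u \<le> n} \<longleftrightarrow> u \<in> ({..Gpois mu n} \<inter> {..<1}) \<union> (if Gpois_inv mu 1 \<le> n then {1} else {})
     \<union> (if Gpois_inv mu 2 \<le> n then {1<..} else {})"
    proof cases
      case 1 then show ?thesis using quantile[OF 1, of mu n] by auto
    next
      case 2 then show ?thesis by auto
    next
      case 3 then show ?thesis using Gpois_inv_gt1[OF 3, of mu] by auto
    qed
  qed
  then show ?thesis by simp
qed

lemma Gpois_inv_meas[measurable]: "Gpois_inv mu \<in> measurable borel (count_space UNIV)"
proof (subst measurable_count_space_eq2_countable, safe)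
  fix n
  show "Gpois_inv mu -` {n} \<inter> space borel \<in> sets borel"
  proof (cases "n = 0")
    case True
    then have "Gpois_inv mu -` {n} \<inter> space borel = {u. Gpois_inv mu u \<le> 0}" by auto
    then show ?thesis by (simp only: sub_sets)
  next
    case False
    then have "Gpois_inv mu -` {n} \<inter> space borel = {u. Gpois_inv mu u \<le> n} - {u. Gpois_inv mu u \<le> n - 1}"
      by auto
    then show ?thesis using sub_sets by (simp add: sets.Diff)
  qed
qed auto


abbreviation UU :: "real measure" where "UU \<equiv> uniform_measure lborel {0<..<1::real}"

lemma UU_prob: "prob_space UU"
  by (intro prob_space_uniform_measure) auto

lemma measU: "A \<in> sets borel \<Longrightarrow> measure UU A = measure lborel ({0<..<1} \<inter> A)"
  by (subst measure_uniform_measure) auto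

lemma prod_sets:
  fixes p :: "'a::countable pmf" and S :: "('a \<times> real) set"
  assumes "\<And>d. Pair d -` S \<in> sets borel"
  shows "S \<in> sets (measure_pmf p \<Otimes>\<^sub>M UU)"
proof -
  have e: "sets (measure_pmf p \<Otimes>\<^sub>M UU) = sets (count_space UNIV \<Otimes>\<^sub>M borel)"
    by (intro sets_pair_measure_cong) auto
  have "(\<lambda>x. x \<in> S) \<in> measurable (count_space UNIV \<Otimes>\<^sub>M borel) (count_space UNIV)"
  proof (rule measurable_pair_measure_countable1)
    fix x :: 'a
    have "(\<lambda>y. y \<in> Pair x -` S) \<in> measurable borel (count_space UNIV)"
      using assms[of x] by measurable
    then show "(\<lambda>y. (x, y) \<in> S) \<in> measurable borel (count_space UNIV)" by simp
  qed simp
  then have "{x \<in> space (count_space UNIV \<Otimes>\<^sub>M borel). x \<in> S} \<in> sets (count_space UNIV \<Otimes>\<^sub>M borel)"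
    by (rule predE)
  then show ?thesis unfolding e by (simp add: space_pair_measure)
qed

lemma prod_emeas:
  fixes p :: "'a::countable pmf" and S :: "('a \<times> real) set"
  assumes "\<And>d. Pair d -` S \<in> sets borel"
  shows "emeasure (measure_pmf p \<Otimes>\<^sub>M UU) S = (\<integral>\<^sup>+ d. ennreal (measure lborel ({0<..<1} \<inter> Pair d -` S)) \<partial>p)"
proof -
  interpret U: prob_space UU by (rule UU_prob)
  have "emeasure (measure_pmf p \<Otimes>\<^sub>M UU) S = (\<integral>\<^sup>+ d. emeasure UU (Pair d -` S) \<partial>p)"
    by (rule U.emeasure_pair_measure_alt[OF prod_sets[OF assms]])
  also have "\<dots> = (\<integral>\<^sup>+ d. ennreal (measure lborel ({0<..<1} \<inter> Pair d -` S)) \<partial>p)"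
    by (intro nn_integral_cong) (simp add: U.emeasure_eq_measure measU assms)
  finally show ?thesis .
qed


lemma meas_Ioc: "0 \<le> c \<Longrightarrow> c \<le> 1 \<Longrightarrow> measure lborel ({0<..<1} \<inter> {u::real. u \<le> c}) = c"
proof (cases "c = 1")
  case True
  then have "{0<..<1} \<inter> {u::real. u \<le> c} = {0<..<1}" by auto
  then show ?thesis using True by simp
next
  case False
  assume "0 \<le> c" "c \<le> 1"
  with False have "{0<..<1} \<inter> {u::real. u \<le> c} = {0<..c}" by auto
  then show ?thesis using \<open>0 \<le> c\<close> by simp
qed

lemma real_le_floor_iff: "0 \<le> x \<Longrightarrow> (real n \<le> x \<longleftrightarrow> n \<le> nat \<lfloor>x\<rfloor>)"
  by (simp add: le_nat_iff le_floor_iff)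

lemma sec_sets: "Pair d -` {\<omega>. R (bzip_plus_X L theta \<omega>)} \<in> sets borel"
proof -
  obtain w y1 y2 where d: "d = (w, y1, y2)" by (cases d) auto
  have "(\<lambda>u. R (if w then (y1 + Gpois_inv (theta * fst L) u, y2 + Gpois_inv (theta * snd L) u) else (0, 0)))
        \<in> measurable borel (count_space UNIV)"
  proof (rule measurable_compose_countable[where g = "Gpois_inv (theta * fst L)"])
    fix i
    show "(\<lambda>u. R (if w then (y1 + i, y2 + Gpois_inv (theta * snd L) u) else (0, 0))) \<in> measurable borel (count_space UNIV)"
      by (rule measurable_compose_countable[where g = "Gpois_inv (theta * snd L)"]) auto
  qed auto
  then have "{u \<in> space borel. R (if w then (y1 + Gpois_inv (theta * fst L) u, y2 + Gpois_inv (theta * snd L) u) else (0, 0))} \<in> sets borel"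
    by (rule predE)
  then show ?thesis by (simp add: d bzip_plus_X_def vimage_def)
qed


lemma bern_pair:
  fixes P :: "'b pmf"
  assumes q: "0 \<le> q" "q \<le> 1" and c: "0 \<le> c" and h: "\<And>y. 0 \<le> h y" "\<And>y. h y \<le> 1"
  shows "(\<integral>\<^sup>+ d. ennreal (if fst d then h (snd d) else c) \<partial>pair_pmf (bernoulli_pmf q) P)
         = ennreal (q * (\<integral>y. h y \<partial>P) + (1 - q) * c)"
proof -
  have ih: "integrable (measure_pmf P) h"
    by (rule measure_pmf.integrable_const_bound[where B=1]) (auto simp: h)
  have inner: "(\<integral>\<^sup>+ y. ennreal (if w then h y else c) \<partial>P) = ennreal (if w then (\<integral>y. h y \<partial>P) else c)" for w
  proof (cases w)
    case True
    then show ?thesis using nn_integral_eq_integral[OF ih] h by simp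
  next
    case False
    then show ?thesis by (simp add: measure_pmf.emeasure_space_1)
  qed
  have "0 \<le> (\<integral>y. h y \<partial>P)" by (rule integral_nonneg_AE) (simp add: h)
  have "(\<integral>\<^sup>+ d. ennreal (if fst d then h (snd d) else c) \<partial>pair_pmf (bernoulli_pmf q) P)
     = (\<integral>\<^sup>+ w. \<integral>\<^sup>+ y. ennreal (if w then h y else c) \<partial>P \<partial>bernoulli_pmf q)"
    unfolding nn_integral_pair_pmf' fst_conv snd_conv ..
  also have "\<dots> = (\<integral>\<^sup>+ w. ennreal (if w then (\<integral>y. h y \<partial>P) else c) \<partial>bernoulli_pmf q)"
    by (simp add: inner)
  also have "\<dots> = (\<Sum>w\<in>UNIV. ennreal (if w then (\<integral>y. h y \<partial>P) else c) * pmf (bernoulli_pmf q) w)"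
    by (rule nn_integral_measure_pmf_support) auto
  also have "\<dots> = ennreal (q * (\<integral>y. h y \<partial>P) + (1 - q) * c)"
    using q c h \<open>0 \<le> (\<integral>y. h y \<partial>P)\<close>
    by (simp add: UNIV_bool ennreal_mult'[symmetric] ennreal_plus[symmetric] mult.commute del: ennreal_plus)
  finally show ?thesis .
qed


lemma GEN:
  assumes "0 \<le> phi" "phi < 1"
  shows "measure (bzip_space L theta phi) {\<omega> \<in> space (bzip_space L theta phi). R (bzip_plus_X L theta \<omega>)}
    = phi * (if R (0,0) then 1 else 0) + (1 - phi) * (\<integral>y. measure lborel ({0<..<1} \<inter>
        {u. R (fst y + Gpois_inv (theta * fst L) u, snd y + Gpois_inv (theta * snd L) u)})
        \<partial>(pair_pmf (pois ((1-theta)* fst L)) (pois ((1-theta)* snd L))))"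
proof -
  define S where "S = {\<omega>. R (bzip_plus_X L theta \<omega>)}"
  have sp: "space (bzip_space L theta phi) = UNIV"
    by (simp add: bzip_space_def space_pair_measure)
  define h where "h y = measure lborel ({0<..<1} \<inter>
        {u. R (fst y + Gpois_inv (theta * fst L) u, snd y + Gpois_inv (theta * snd L) u)})" for y :: "nat \<times> nat"
  define c :: real where "c = (if R (0,0) then 1 else 0)"
  have ss: "Pair d -` S \<in> sets borel" for d unfolding S_def by (rule sec_sets)
  have hS: "h y = measure lborel ({0<..<1} \<inter> Pair (True, y) -` S)" for y
    by (cases y) (simp add: h_def S_def bzip_plus_X_def vimage_def)
  have sec: "measure lborel ({0<..<1} \<inter> Pair d -` S) = (if fst d then h (snd d) else c)" for d
  proof -
    obtain w y where d: "d = (w, y)" by (cases d) auto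
    show ?thesis
    proof (cases w)
      case True then show ?thesis by (simp add: d hS)
    next
      case False
      then have "{0<..<1} \<inter> Pair d -` S = (if R (0,0) then {0<..<1} else {})"
        by (auto simp: d S_def bzip_plus_X_def split: prod.splits)
      then show ?thesis using False by (simp add: d c_def)
    qed
  qed
  have h0: "0 \<le> h y" for y by (simp add: h_def)
  have h1: "h y \<le> 1" for y
  proof -
    have "measure lborel ({0<..<1} \<inter> Pair (True, y) -` S) \<le> measure lborel {0<..<1::real}"
      by (rule measure_mono_fmeasurable) (use ss in \<open>auto simp: fmeasurable_def\<close>)
    then show ?thesis by (simp add: hS)
  qed
  have "emeasure (bzip_space L theta phi) S = (\<integral>\<^sup>+ d. ennreal (measure lborel ({0<..<1} \<inter> Pair d -` S))
     \<partial>(pair_pmf (bernoulli_pmf (1 - phi)) (pair_pmf (pois ((1 - theta) * fst L)) (pois ((1 - theta) * snd L)))))"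
    unfolding bzip_space_def by (rule prod_emeas[OF ss])
  also have "\<dots> = (\<integral>\<^sup>+ d. ennreal (if fst d then h (snd d) else c)
     \<partial>(pair_pmf (bernoulli_pmf (1 - phi)) (pair_pmf (pois ((1 - theta) * fst L)) (pois ((1 - theta) * snd L)))))"
    by (simp only: sec)
  also have "\<dots> = ennreal ((1 - phi) * (\<integral>y. h y \<partial>(pair_pmf (pois ((1 - theta) * fst L)) (pois ((1 - theta) * snd L))))
      + (1 - (1 - phi)) * c)"
    by (rule bern_pair) (use assms h0 h1 in \<open>auto simp: c_def\<close>)
  finally have e: "emeasure (bzip_space L theta phi) S = ennreal ((1 - phi) * (\<integral>y. h y \<partial>(pair_pmf (pois ((1 - theta) * fst L)) (pois ((1 - theta) * snd L))))
      + phi * c)" by simp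
  have "0 \<le> (\<integral>y. h y \<partial>(pair_pmf (pois ((1 - theta) * fst L)) (pois ((1 - theta) * snd L))))"
    by (rule integral_nonneg_AE) (simp add: h0)
  then have "measure (bzip_space L theta phi) S = (1 - phi) * (\<integral>y. h y \<partial>(pair_pmf (pois ((1 - theta) * fst L)) (pois ((1 - theta) * snd L))))
      + phi * c"
    unfolding measure_def e using assms by (subst enn2real_ennreal) (auto simp: c_def)
  then show ?thesis by (simp add: sp S_def h_def c_def algebra_simps)
qed


lemma cond_iff:
  assumes "0 \<le> x" "u < 1"
  shows "real (y + Gpois_inv mu u) \<le> x \<longleftrightarrow> (y \<le> nat \<lfloor>x\<rfloor> \<and> u \<le> Gpois mu (nat \<lfloor>x\<rfloor> - y))"
proof -
  have "real (y + Gpois_inv mu u) \<le> x \<longleftrightarrow> y + Gpois_inv mu u \<le> nat \<lfloor>x\<rfloor>"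
    using real_le_floor_iff[OF assms(1)] by blast
  also have "\<dots> \<longleftrightarrow> y \<le> nat \<lfloor>x\<rfloor> \<and> Gpois_inv mu u \<le> nat \<lfloor>x\<rfloor> - y" by auto
  also have "\<dots> \<longleftrightarrow> y \<le> nat \<lfloor>x\<rfloor> \<and> u \<le> Gpois mu (nat \<lfloor>x\<rfloor> - y)"
    using quantile[OF assms(2)] by blast
  finally show ?thesis .
qed

lemma Gpois_nonneg: "0 \<le> Gpois mu n"
  by (simp add: Gpois_def)

lemma H_formula:
  assumes "0 \<le> phi" "phi < 1" "0 \<le> theta" "theta \<le> 1" "0 < l1" "0 < l2" "0 \<le> x1" "0 \<le> x2"
  shows "H_plus (l1, l2) phi theta x1 x2 = phi + (1 - phi) *
          QQ ((1-theta) * l1) ((1-theta) * l2) (theta * l1) (theta * l2) (nat \<lfloor>x1\<rfloor>) (nat \<lfloor>x2\<rfloor>)"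
proof -
  define a where "a = nat \<lfloor>x1\<rfloor>"
  define b where "b = nat \<lfloor>x2\<rfloor>"
  define hH where "hH y = (if fst y \<le> a \<and> snd y \<le> b then min (Gpois (theta * l1) (a - fst y)) (Gpois (theta * l2) (b - snd y)) else 0)" for y :: "nat \<times> nat"
  have sec: "measure lborel ({0<..<1} \<inter> {u. real (fst y + Gpois_inv (theta * l1) u) \<le> x1 \<and> real (snd y + Gpois_inv (theta * l2) u) \<le> x2})
     = hH y" for y
  proof -
    have seteq: "{0<..<1} \<inter> {u. real (fst y + Gpois_inv (theta * l1) u) \<le> x1 \<and> real (snd y + Gpois_inv (theta * l2) u) \<le> x2}
      = (if fst y \<le> a \<and> snd y \<le> b then {0<..<1} \<inter> {u. u \<le> min (Gpois (theta * l1) (a - fst y)) (Gpois (theta * l2) (b - snd y))} else {})"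
      using cond_iff[OF assms(7)] cond_iff[OF assms(8)] by (auto simp: a_def b_def)
    show ?thesis
    proof (cases "fst y \<le> a \<and> snd y \<le> b")
      case True
      have "measure lborel ({0<..<1} \<inter> {u. u \<le> min (Gpois (theta * l1) (a - fst y)) (Gpois (theta * l2) (b - snd y))})
          = min (Gpois (theta * l1) (a - fst y)) (Gpois (theta * l2) (b - snd y))"
        by (rule meas_Ioc) (simp_all add: Gpois_nonneg Gpois_le1 min_le_iff_disj)
      then show ?thesis using True seteq by (simp only: hH_def if_True simp_thms)
    next
      case False
      then show ?thesis using seteq by (simp only: hH_def if_False measure_empty)
    qed
  qed
  have "H_plus (l1, l2) phi theta x1 x2 = phi * 1 + (1 - phi) *
     (\<integral>y. hH y \<partial>(pair_pmf (pois ((1-theta) * l1)) (pois ((1-theta) * l2))))"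
    unfolding H_plus_def
    by (subst GEN[where R = "\<lambda>z. real (fst z) \<le> x1 \<and> real (snd z) \<le> x2"]) (use assms sec in simp_all)
  also have "(\<integral>y. hH y \<partial>(pair_pmf (pois ((1-theta) * l1)) (pois ((1-theta) * l2))))
     = (\<Sum>y\<in>{..a} \<times> {..b}. hH y * pmf (pair_pmf (pois ((1-theta) * l1)) (pois ((1-theta) * l2))) y)"
    by (rule integral_measure_pmf_real) (auto simp: hH_def split: if_splits)
  also have "\<dots> = QQ ((1-theta) * l1) ((1-theta) * l2) (theta * l1) (theta * l2) a b"
  proof -
    have n1: "0 \<le> (1-theta) * l1" "0 \<le> (1-theta) * l2" "0 \<le> theta * l1" "0 \<le> theta * l2"
      using assms by auto
    have "(\<Sum>y\<in>{..a} \<times> {..b}. hH y * pmf (pair_pmf (pois ((1-theta) * l1)) (pois ((1-theta) * l2))) y)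
       = (\<Sum>y1\<le>a. \<Sum>y2\<le>b. hH (y1, y2) * pmf (pair_pmf (pois ((1-theta) * l1)) (pois ((1-theta) * l2))) (y1, y2))"
      by (simp add: sum.cartesian_product case_prod_unfold)
    also have "\<dots> = QQ ((1-theta) * l1) ((1-theta) * l2) (theta * l1) (theta * l2) a b"
      unfolding QQ_def
      by (intro sum.cong refl) (simp add: hH_def pmf_pair pmf_pois[OF n1(1)] pmf_pois[OF n1(2)] Gpois_eq[OF n1(3)] Gpois_eq[OF n1(4)])
    finally show ?thesis .
  qed
  finally show ?thesis by (simp add: a_def b_def)
qed


lemma F1_formula:
  assumes "0 \<le> phi" "phi < 1" "0 \<le> theta" "theta \<le> 1" "0 < l1" "0 < l2" "0 \<le> x"
  shows "F1_plus (l1, l2) phi theta x = phi + (1 - phi) * GG l1 (nat \<lfloor>x\<rfloor>)"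
proof -
  define a where "a = nat \<lfloor>x\<rfloor>"
  define hF where "hF y = (if y \<le> a then Gpois (theta * l1) (a - y) else 0)" for y :: nat
  have sec: "measure lborel ({0<..<1} \<inter> {u. real (fst y + Gpois_inv (theta * l1) u) \<le> x}) = hF (fst y)" for y
  proof -
    have seteq: "{0<..<1} \<inter> {u. real (fst y + Gpois_inv (theta * l1) u) \<le> x}
      = (if fst y \<le> a then {0<..<1} \<inter> {u. u \<le> Gpois (theta * l1) (a - fst y)} else {})"
      using cond_iff[OF assms(7)] by (auto simp: a_def)
    show ?thesis
    proof (cases "fst y \<le> a")
      case True
      have "measure lborel ({0<..<1} \<inter> {u. u \<le> Gpois (theta * l1) (a - fst y)}) = Gpois (theta * l1) (a - fst y)"
        by (rule meas_Ioc) (simp_all add: Gpois_nonneg Gpois_le1)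
      then show ?thesis using True seteq by (simp only: hF_def if_True simp_thms)
    next
      case False
      then show ?thesis using seteq by (simp only: hF_def if_False measure_empty)
    qed
  qed
  have "F1_plus (l1, l2) phi theta x = phi * 1 + (1 - phi) *
     (\<integral>y. hF (fst y) \<partial>(pair_pmf (pois ((1-theta) * l1)) (pois ((1-theta) * l2))))"
    unfolding F1_plus_def
    by (subst GEN[where R = "\<lambda>z. real (fst z) \<le> x"], simp_all only: fst_conv snd_conv sec, use assms in simp_all)
  also have "(\<integral>y. hF (fst y) \<partial>(pair_pmf (pois ((1-theta) * l1)) (pois ((1-theta) * l2))))
      = (\<integral>y. hF y \<partial>(map_pmf fst (pair_pmf (pois ((1-theta) * l1)) (pois ((1-theta) * l2)))))"
    by simp
  also have "\<dots> = (\<integral>y. hF y \<partial>(pois ((1-theta) * l1)))"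
    by (simp only: map_fst_pair_pmf)
  also have "\<dots> = (\<Sum>y\<in>{..a}. hF y * pmf (pois ((1-theta) * l1)) y)"
    by (rule integral_measure_pmf_real) (auto simp: hF_def split: if_splits)
  also have "\<dots> = (\<Sum>y\<le>a. pp ((1-theta) * l1) y * GG (theta * l1) (a - y))"
    using assms by (intro sum.cong refl) (simp add: hF_def pmf_pois Gpois_eq)
  also have "\<dots> = GG ((1-theta) * l1 + theta * l1) a"
    by (rule GG_conv)
  also have "\<dots> = GG l1 a" by (simp add: algebra_simps)
  finally show ?thesis by (simp add: a_def)
qed

lemma F2_formula:
  assumes "0 \<le> phi" "phi < 1" "0 \<le> theta" "theta \<le> 1" "0 < l1" "0 < l2" "0 \<le> x"
  shows "F2_plus (l1, l2) phi theta x = phi + (1 - phi) * GG l2 (nat \<lfloor>x\<rfloor>)"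
proof -
  define a where "a = nat \<lfloor>x\<rfloor>"
  define hF where "hF y = (if y \<le> a then Gpois (theta * l2) (a - y) else 0)" for y :: nat
  have sec: "measure lborel ({0<..<1} \<inter> {u. real (snd y + Gpois_inv (theta * l2) u) \<le> x}) = hF (snd y)" for y
  proof -
    have seteq: "{0<..<1} \<inter> {u. real (snd y + Gpois_inv (theta * l2) u) \<le> x}
      = (if snd y \<le> a then {0<..<1} \<inter> {u. u \<le> Gpois (theta * l2) (a - snd y)} else {})"
      using cond_iff[OF assms(7)] by (auto simp: a_def)
    show ?thesis
    proof (cases "snd y \<le> a")
      case True
      have "measure lborel ({0<..<1} \<inter> {u. u \<le> Gpois (theta * l2) (a - snd y)}) = Gpois (theta * l2) (a - snd y)"
        by (rule meas_Ioc) (simp_all add: Gpois_nonneg Gpois_le1)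
      then show ?thesis using True seteq by (simp only: hF_def if_True simp_thms)
    next
      case False
      then show ?thesis using seteq by (simp only: hF_def if_False measure_empty)
    qed
  qed
  have "F2_plus (l1, l2) phi theta x = phi * 1 + (1 - phi) *
     (\<integral>y. hF (snd y) \<partial>(pair_pmf (pois ((1-theta) * l1)) (pois ((1-theta) * l2))))"
    unfolding F2_plus_def
    by (subst GEN[where R = "\<lambda>z. real (snd z) \<le> x"], simp_all only: fst_conv snd_conv sec, use assms in simp_all)
  also have "(\<integral>y. hF (snd y) \<partial>(pair_pmf (pois ((1-theta) * l1)) (pois ((1-theta) * l2))))
      = (\<integral>y. hF y \<partial>(map_pmf snd (pair_pmf (pois ((1-theta) * l1)) (pois ((1-theta) * l2)))))"
    by simp
  also have "\<dots> = (\<integral>y. hF y \<partial>(pois ((1-theta) * l2)))"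
    by (simp only: map_snd_pair_pmf)
  also have "\<dots> = (\<Sum>y\<in>{..a}. hF y * pmf (pois ((1-theta) * l2)) y)"
    by (rule integral_measure_pmf_real) (auto simp: hF_def split: if_splits)
  also have "\<dots> = (\<Sum>y\<le>a. pp ((1-theta) * l2) y * GG (theta * l2) (a - y))"
    using assms by (intro sum.cong refl) (simp add: hF_def pmf_pois Gpois_eq)
  also have "\<dots> = GG ((1-theta) * l2 + theta * l2) a"
    by (rule GG_conv)
  also have "\<dots> = GG l2 a" by (simp add: algebra_simps)
  finally show ?thesis by (simp add: a_def)
qed

lemma neg_empty:
  assumes "x < 0"
  shows "{\<omega> \<in> space M. real (f \<omega> :: nat) \<le> x \<and> Q \<omega>} = {}" "{\<omega> \<in> space M. Q \<omega> \<and> real (f \<omega> :: nat) \<le> x} = {}"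
    "{\<omega> \<in> space M. real (f \<omega> :: nat) \<le> x} = {}"
  using assms by (auto simp: not_le)


theorem corollary1:
  fixes l1 l2 phi theta theta' :: real
  assumes "0 < l1" and "0 < l2"
    and "0 \<le> phi" and "phi < 1"
    and "0 \<le> theta" and "theta < theta'" and "theta' \<le> 1"
  shows "bzip_plus_PQD (l1, l2) phi theta theta' \<and>
         (\<forall>x1 x2. H_plus (l1, l2) phi theta x1 x2 \<le> H_plus (l1, l2) phi theta' x1 x2)"
proof -
  have t: "0 \<le> theta" "theta \<le> 1" "0 \<le> theta'" "theta' \<le> 1" using assms by auto
  have F1: "F1_plus (l1, l2) phi theta x = F1_plus (l1, l2) phi theta' x" for x
  proof (cases "0 \<le> x")
    case True
    then show ?thesis using F1_formula[OF assms(3,4) t(1,2) assms(1,2) True]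
        F1_formula[OF assms(3,4) t(3,4) assms(1,2) True] by simp
  next
    case False
    then show ?thesis unfolding F1_plus_def by (simp add: neg_empty(3))
  qed
  have F2: "F2_plus (l1, l2) phi theta x = F2_plus (l1, l2) phi theta' x" for x
  proof (cases "0 \<le> x")
    case True
    then show ?thesis using F2_formula[OF assms(3,4) t(1,2) assms(1,2) True]
        F2_formula[OF assms(3,4) t(3,4) assms(1,2) True] by simp
  next
    case False
    then show ?thesis unfolding F2_plus_def by (simp add: neg_empty(3))
  qed
  have H: "H_plus (l1, l2) phi theta x1 x2 \<le> H_plus (l1, l2) phi theta' x1 x2" for x1 x2
  proof (cases "0 \<le> x1 \<and> 0 \<le> x2")
    case True
    then have x: "0 \<le> x1" "0 \<le> x2" by auto
    define m1 where "m1 = (1 - theta') * l1"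
    define m2 where "m2 = (1 - theta') * l2"
    define d1 where "d1 = (theta' - theta) * l1"
    define d2 where "d2 = (theta' - theta) * l2"
    have e: "(1 - theta) * l1 = m1 + d1" "(1 - theta) * l2 = m2 + d2"
       "theta' * l1 = theta * l1 + d1" "theta' * l2 = theta * l2 + d2"
      by (simp_all add: m1_def m2_def d1_def d2_def algebra_simps)
    have "QQ ((1-theta) * l1) ((1-theta) * l2) (theta * l1) (theta * l2) (nat \<lfloor>x1\<rfloor>) (nat \<lfloor>x2\<rfloor>)
       \<le> QQ ((1-theta') * l1) ((1-theta') * l2) (theta' * l1) (theta' * l2) (nat \<lfloor>x1\<rfloor>) (nat \<lfloor>x2\<rfloor>)"
      unfolding e by (fold m1_def m2_def, rule QQ_mono)
        (use assms in \<open>auto simp: m1_def m2_def d1_def d2_def\<close>)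
    moreover have "0 \<le> 1 - phi" using assms by simp
    ultimately show ?thesis
      using H_formula[OF assms(3,4) t(1,2) assms(1,2) x] H_formula[OF assms(3,4) t(3,4) assms(1,2) x]
      by (simp add: mult_left_mono)
  next
    case False
    then have "x1 < 0 \<or> x2 < 0" by auto
    then show ?thesis unfolding H_plus_def by (auto simp: neg_empty(1,2))
  qed
  show ?thesis using F1 F2 H by (simp add: bzip_plus_PQD_def)
qed

end
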